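(* Let $\varphi: S\to R$ be a ring morphism, $\mathbf{t}=\{t_1,\ldots,t_n\}$ a quasi-regular sequence in $R$ with $R/\mathbf{t}R$ a finitely generated projective $S$-module, and suppose $R$ admits a flat $S$-linear connection $\nabla^0$ as an $S[\mathbf{t}]$-module with $\operatorname{Ker}(\nabla^0)+\mathbf{t}R = R$. Let $(X,d_X)$ be a finite rank matrix factorisation over $R$ of $W\in S$, with fixed homogeneous $R$-basis, and let $\alpha$ be a degree $n$ $R$-linear map on $X$ such that the induced map $X/\mathbf{t}X\to X/\mathbf{t}X[n]$ is a morphism of linear factorisations. Then \[ \mathrm{str}_S\big(\alpha\circ\mathrm{At}_{S[\mathbf{t}]/S}(X)^n\big) = (-1)^n\,\mathrm{Res}_{R/S}\begin{bmatrix}\mathrm{str}_R\big(\alpha\cdot\mathrm{d}_{R/S}(d_X)^{\wedge n}\big)\\ t_1,\ldots,t_n\end{bmatrix}, \] where the supertrace on the left is of the induced $S$-linear endomorphism of $X/\mathbf{t}X$.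
   Context: All rings commutative. A finite rank matrix factorisation of $W$ over $R$ is a $\mathbb{Z}/2$-graded free finite rank $R$-module with odd $d_X$, $d_X^2=W\cdot1$. The supertrace of a homogeneous endomorphism $f$ of a finitely generated projective $\mathbb{Z}/2$-graded module is the trace of $Gf$, $G$ the grading operator $x\mapsto(-1)^{|x|}x$. $S[\mathbf{t}]$ is the polynomial ring in formal variables $t_i$; $\nabla^0: R\to R\otimes_{S[\mathbf{t}]}\Omega^1_{S[\mathbf{t}]/S}$ is $S$-linear with Leibniz rule, written $\nabla^0(r) = \sum_j\partial_j(r)\otimes\mathrm{d}t_j$; flat means the $\partial_j$ commute. For $r\in R$ the commutator $[\partial_j,r]$ (with $r$ acting by multiplication) is $S[\mathbf{t}]$-linear on $R$, hence induces an $S$-linear map on $R/\mathbf{t}R$. The residue symbol is \[\mathrm{Res}_{R/S}\begin{bmatrix}s\,\mathrm{d}r_1\cdots\mathrm{d}r_n\\t_1,\ldots,t_n\end{bmatrix} = \sum_{\tau\in S_n}\mathrm{sgn}(\tau)\,\mathrm{tr}_S\big(s[\partial_{\tau(1)},r_1]\cdots[\partial_{\tau(n)},r_n]\big)\in S,\] the trace being over $R/\mathbf{t}R$; it is independent of $\nabla^0$, depends only on $s\,\mathrm{d}r_1\wedge\cdots\wedge\mathrm{d}r_n\in\Omega^n_{R/S}$, and extends $S$-linearly to all of $\Omega^n_{R/S}$. In the basis, $d_X$ is a matrix over $R$, $\mathrm{d}_{R/S}(d_X)$ its entrywise Kähler differential (a matrix of 1-forms), and $\mathrm{str}_R(\alpha\cdot\mathrm{d}_{R/S}(d_X)^{\wedge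 n})\in\Omega^n_{R/S}$. The Atiyah class is $\mathrm{At}_{S[\mathbf{t}]/S}(X) = [d_X,\nabla_X]$ where $\nabla_X(r\xi_i)=\xi_i\otimes\nabla^0(r)$; its $n$-th iterate (using wedge product and trivialising $\Omega^n_{S[\mathbf{t}]/S}$ by $\mathrm{d}t_1\wedge\cdots\wedge\mathrm{d}t_n$) is a degree $n$ $S[\mathbf{t}]$-linear endomorphism of $X$, inducing an $S$-linear map on $X/\mathbf{t}X = X\otimes_RR/\mathbf{t}R$. *)

theory Defs
  imports "HOL-Combinatorics.Permutations" "HOL-Library.FuncSet" "HOL-Library.Function_Algebras"
begin

definition ring_morphism :: "('s::comm_ring_1 \<Rightarrow> 'r::comm_ring_1) \<Rightarrow> bool" where
  "ring_morphism \<phi> \<longleftrightarrow> \<phi> 1 = 1 \<and> (\<forall>a b. \<phi> (a + b) = \<phi> a + \<phi> b) \<and> (\<forall>a b. \<phi> (a * b) = \<phi> a * \<phi> b)"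

definition tideal :: "(nat \<Rightarrow> 'r::comm_ring_1) \<Rightarrow> nat \<Rightarrow> 'r set" where
  "tideal t n = {r. \<exists>c. r = (\<Sum>i<n. c i * t i)}"

definition expset :: "nat \<Rightarrow> nat \<Rightarrow> (nat \<Rightarrow> nat) set" where
  "expset n k = {e. (\<forall>i. n \<le> i \<longrightarrow> e i = 0) \<and> (\<Sum>i<n. e i) = k}"

definition tmono :: "(nat \<Rightarrow> 'r::comm_ring_1) \<Rightarrow> nat \<Rightarrow> (nat \<Rightarrow> nat) \<Rightarrow> 'r" where
  "tmono t n e = (\<Prod>i<n. t i ^ e i)"

(* quasi-regular: (R/I)[T] -> gr_I(R) is injective, i.e. a degree-k form in t
   lying in I^(k+1) has all its coefficients in I *)
definition quasi_regular :: "(nat \<Rightarrow> 'r::comm_ring_1) \<Rightarrow> nat \<Rightarrow> bool" where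
  "quasi_regular t n \<longleftrightarrow>
     (\<forall>k c d. (\<Sum>e\<in>expset n k. c e * tmono t n e) = (\<Sum>e\<in>expset n (Suc k). d e * tmono t n e)
        \<longrightarrow> (\<forall>e\<in>expset n k. c e \<in> tideal t n))"

definition is_dual_basis ::
  "('s::comm_ring_1 \<Rightarrow> 'm::ab_group_add \<Rightarrow> 'm) \<Rightarrow> 'm set \<Rightarrow> 'm set \<Rightarrow> ('m \<times> ('m \<Rightarrow> 's)) list \<Rightarrow> bool" where
  "is_dual_basis sc M K B \<longleftrightarrow>
     (\<forall>(x, f) \<in> set B. x \<in> M \<and> (\<forall>y\<in>M. \<forall>z\<in>M. f (y + z) = f y + f z)
        \<and> (\<forall>a. \<forall>y\<in>M. f (sc a y) = a * f y) \<and> (\<forall>y\<in>K. f y = 0)) \<and>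
     (\<forall>y\<in>M. y - (\<Sum>(x, f)\<leftarrow>B. sc (f y) x) \<in> K)"

(* M/K is a finitely generated projective S-module (dual basis lemma) *)
definition fg_projective :: "('s::comm_ring_1 \<Rightarrow> 'm::ab_group_add \<Rightarrow> 'm) \<Rightarrow> 'm set \<Rightarrow> 'm set \<Rightarrow> bool" where
  "fg_projective sc M K \<longleftrightarrow> (\<exists>B. is_dual_basis sc M K B)"

definition qtrace :: "('s::comm_ring_1 \<Rightarrow> 'm::ab_group_add \<Rightarrow> 'm) \<Rightarrow> 'm set \<Rightarrow> 'm set \<Rightarrow> ('m \<Rightarrow> 'm) \<Rightarrow> 's" where
  "qtrace sc M K g = (let B = (SOME B. is_dual_basis sc M K B) in (\<Sum>(x, f)\<leftarrow>B. f (g x)))"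

(* flat S-linear connection on R as S[t]-module, in components D j = \<partial>_j *)
definition is_connection :: "('s::comm_ring_1 \<Rightarrow> 'r::comm_ring_1) \<Rightarrow> (nat \<Rightarrow> 'r) \<Rightarrow> nat \<Rightarrow> (nat \<Rightarrow> 'r \<Rightarrow> 'r) \<Rightarrow> bool" where
  "is_connection \<phi> t n D \<longleftrightarrow>
     (\<forall>j<n. \<forall>x y. D j (x + y) = D j x + D j y) \<and>
     (\<forall>j<n. \<forall>s x. D j (\<phi> s * x) = \<phi> s * D j x) \<and>
     (\<forall>j<n. \<forall>k<n. \<forall>x. D j (t k * x) = t k * D j x + (if j = k then x else 0))"

definition flat_connection :: "nat \<Rightarrow> (nat \<Rightarrow> 'r \<Rightarrow> 'r) \<Rightarrow> bool" where
  "flat_connection n D \<longleftrightarrow> (\<forall>j<n. \<forall>k<n. \<forall>x. D j (D k x) = D k (D j x))"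

(* finite rank matrix factorisation of W (image in R) with homogeneous basis
   xi_0..xi_{N-1}, deg i = True iff xi_i is odd *)
definition is_mf :: "('s::comm_ring_1 \<Rightarrow> 'r::comm_ring_1) \<Rightarrow> 's \<Rightarrow> nat \<Rightarrow> (nat \<Rightarrow> bool) \<Rightarrow> (nat \<Rightarrow> nat \<Rightarrow> 'r) \<Rightarrow> bool" where
  "is_mf \<phi> W N deg d \<longleftrightarrow>
     (\<forall>a<N. \<forall>b<N. d a b \<noteq> 0 \<longrightarrow> deg a \<noteq> deg b) \<and>
     (\<forall>a<N. \<forall>b<N. (\<Sum>c<N. d a c * d c b) = (if a = b then \<phi> W else 0))"

(* X = R^N as coordinate vectors *)
definition vecs :: "nat \<Rightarrow> (nat \<Rightarrow> 'r::comm_ring_1) set" where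
  "vecs N = {v. \<forall>i. N \<le> i \<longrightarrow> v i = 0}"

definition vec_sc :: "('s::comm_ring_1 \<Rightarrow> 'r::comm_ring_1) \<Rightarrow> 's \<Rightarrow> (nat \<Rightarrow> 'r) \<Rightarrow> (nat \<Rightarrow> 'r)" where
  "vec_sc \<phi> s v = (\<lambda>i. \<phi> s * v i)"

definition tvecs :: "(nat \<Rightarrow> 'r::comm_ring_1) \<Rightarrow> nat \<Rightarrow> nat \<Rightarrow> (nat \<Rightarrow> 'r) set" where
  "tvecs t n N = {v \<in> vecs N. \<forall>i. v i \<in> tideal t n}"

definition matop :: "nat \<Rightarrow> (nat \<Rightarrow> nat \<Rightarrow> 'r::comm_ring_1) \<Rightarrow> (nat \<Rightarrow> 'r) \<Rightarrow> (nat \<Rightarrow> 'r)" where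
  "matop N A v = (\<lambda>a. if a < N then (\<Sum>b<N. A a b * v b) else 0)"

definition vecD :: "(nat \<Rightarrow> 'r \<Rightarrow> 'r) \<Rightarrow> nat \<Rightarrow> (nat \<Rightarrow> 'r) \<Rightarrow> (nat \<Rightarrow> 'r)" where
  "vecD D j v = (\<lambda>i. D j (v i))"

definition grading_op :: "(nat \<Rightarrow> bool) \<Rightarrow> (nat \<Rightarrow> 'r::comm_ring_1) \<Rightarrow> (nat \<Rightarrow> 'r)" where
  "grading_op deg v = (\<lambda>i. if deg i then - v i else v i)"

definition comp_ops :: "(nat \<Rightarrow> 'a \<Rightarrow> 'a) \<Rightarrow> nat \<Rightarrow> 'a \<Rightarrow> 'a" where
  "comp_ops ops n = foldr (\<circ>) (map ops [0..<n]) id"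

(* dt_j-component of At(X) = [d_X, nabla_X] = d_X nabla_X - nabla_X d_X *)
definition atiyah :: "nat \<Rightarrow> (nat \<Rightarrow> nat \<Rightarrow> 'r::comm_ring_1) \<Rightarrow> (nat \<Rightarrow> 'r \<Rightarrow> 'r) \<Rightarrow> nat \<Rightarrow> (nat \<Rightarrow> 'r) \<Rightarrow> (nat \<Rightarrow> 'r)" where
  "atiyah N d D j v = (\<lambda>i. matop N d (vecD D j v) i - vecD D j (matop N d v) i)"

(* At(X)^n, trivialised by dt_1 ^ ... ^ dt_n *)
definition atiyah_pow :: "nat \<Rightarrow> (nat \<Rightarrow> nat \<Rightarrow> 'r::comm_ring_1) \<Rightarrow> (nat \<Rightarrow> 'r \<Rightarrow> 'r) \<Rightarrow> nat \<Rightarrow> (nat \<Rightarrow> 'r) \<Rightarrow> (nat \<Rightarrow> 'r)" where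
  "atiyah_pow N d D n v = (\<lambda>i. \<Sum>\<tau> | \<tau> permutes {0..<n}.
       of_int (sign \<tau>) * comp_ops (\<lambda>k. atiyah N d D (\<tau> k)) n v i)"

definition dcomm :: "(nat \<Rightarrow> 'r::comm_ring_1 \<Rightarrow> 'r) \<Rightarrow> nat \<Rightarrow> 'r \<Rightarrow> 'r \<Rightarrow> 'r" where
  "dcomm D j r x = D j (r * x) - r * D j x"

(* Res_{R/S} [ s dr_1 ... dr_n / t_1,...,t_n ],  rs = [r_1,...,r_n] *)
definition res_mon :: "('s::comm_ring_1 \<Rightarrow> 'r::comm_ring_1) \<Rightarrow> (nat \<Rightarrow> 'r) \<Rightarrow> nat \<Rightarrow> (nat \<Rightarrow> 'r \<Rightarrow> 'r) \<Rightarrow> 'r \<Rightarrow> 'r list \<Rightarrow> 's" where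
  "res_mon \<phi> t n D s rs = (\<Sum>\<tau> | \<tau> permutes {0..<n}.
       of_int (sign \<tau>) * qtrace (\<lambda>a x. \<phi> a * x) UNIV (tideal t n)
          (\<lambda>x. s * comp_ops (\<lambda>k. dcomm D (\<tau> k) (rs ! k)) n x))"

(* Res_{R/S}[ str_R(alpha . d(d_X)^n) / t ], expanding the supertrace of the
   matrix product alpha . d(d_X) ^ ... ^ d(d_X) into monomials
   eps(i0) alpha_{i0 i1} d(d_{i1 i2}) ^ ... ^ d(d_{in i0}) and using S-linearity *)
definition res_str :: "('s::comm_ring_1 \<Rightarrow> 'r::comm_ring_1) \<Rightarrow> (nat \<Rightarrow> 'r) \<Rightarrow> nat \<Rightarrow> (nat \<Rightarrow> 'r \<Rightarrow> 'r)
     \<Rightarrow> nat \<Rightarrow> (nat \<Rightarrow> bool) \<Rightarrow> (nat \<Rightarrow> nat \<Rightarrow> 'r) \<Rightarrow> (nat \<Rightarrow> nat \<Rightarrow> 'r) \<Rightarrow> 's" where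
  "res_str \<phi> t n D N deg d \<alpha> =
     (let nx = (\<lambda>k. if k = n then 0 else Suc k) in
      \<Sum>p \<in> {0..n} \<rightarrow>\<^sub>E {0..<N}.
        (if deg (p 0) then -1 else 1) *
        res_mon \<phi> t n D (\<alpha> (p 0) (p (nx 0))) (map (\<lambda>k. d (p k) (p (nx k))) [1..<Suc n]))"

end

theory Submission
  imports Defs
begin



definition additive :: "('a::ab_group_add \<Rightarrow> 'b::ab_group_add) \<Rightarrow> bool" where
  "additive h \<longleftrightarrow> (\<forall>x y. h (x + y) = h x + h y)"

lemma additive_0: "additive h \<Longrightarrow> h 0 = 0"
  unfolding additive_def by (metis add_cancel_right_right add_0)

lemma additive_sum: "additive h \<Longrightarrow> h (\<Sum>i\<in>I. f i) = (\<Sum>i\<in>I. h (f i))"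
  by (induction I rule: infinite_finite_induct) (auto simp: additive_0 additive_def)

lemma additive_neg: "additive h \<Longrightarrow> h (- x) = - h x"
  unfolding additive_def by (metis add.inverse_unique additive_0 additive_def right_minus)

lemma comp_ops_0[simp]: "comp_ops ops 0 = id"
  by (simp add: comp_ops_def)

lemma comp_ops_Suc: "comp_ops ops (Suc m) = comp_ops ops m \<circ> ops m"
proof -
  have "\<And>xs. foldr (\<circ>) (xs @ [ops m]) id = foldr (\<circ>) xs id \<circ> ops m"
    by (induct_tac xs) auto
  then show ?thesis by (simp add: comp_ops_def)
qed

lemma comp_ops_Suc': "comp_ops ops (Suc m) = ops 0 \<circ> comp_ops (\<lambda>k. ops (Suc k)) m"
proof -
  have "[0..<Suc m] = 0 # map Suc [0..<m]" by (simp add: upt_conv_Cons map_Suc_upt)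
  then show ?thesis by (simp add: comp_ops_def comp_def)
qed

lemma comp_ops_cong: "(\<And>k. k < m \<Longrightarrow> ops k = ops' k) \<Longrightarrow> comp_ops ops m = comp_ops ops' m"
  by (induction m) (auto simp: comp_ops_Suc)

lemma comp_ops_additive: "(\<And>k. k < m \<Longrightarrow> additive (ops k)) \<Longrightarrow> additive (comp_ops ops m)"
  by (induction m) (auto simp: comp_ops_Suc additive_def)

lemma comp_ops_neg: fixes x :: "'a::comm_ring_1" shows "(\<And>k. k < m \<Longrightarrow> additive (ops k)) \<Longrightarrow>
   comp_ops (\<lambda>k x. - ops k x) m x = (-1)^m * comp_ops ops m x"
proof (induction m arbitrary: x)
  case 0 then show ?case by simp
next
  case (Suc m)
  have "comp_ops (\<lambda>k x. - ops k x) (Suc m) x = comp_ops (\<lambda>k x. - ops k x) m (- ops m x)"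
    by (simp add: comp_ops_Suc)
  also have "\<dots> = (-1)^m * comp_ops ops m (- ops m x)" using Suc by simp
  also have "\<dots> = (-1)^Suc m * comp_ops ops (Suc m) x"
    using comp_ops_additive[of m ops] Suc.prems by (simp add: additive_neg comp_ops_Suc)
  finally show ?case .
qed

lemma sum_PiE_insert:
  assumes "finite S" "x \<notin> S"
  shows "(\<Sum>q\<in>Pi\<^sub>E (insert x S) T. F q) = (\<Sum>y\<in>T x. \<Sum>g\<in>Pi\<^sub>E S T. F (g(x := y)))"
proof -
  have inj: "inj_on (\<lambda>(y, g). g(x := y)) (T x \<times> Pi\<^sub>E S T)"
    using assms(2) by (auto simp: inj_on_def fun_eq_iff PiE_iff extensional_def split: if_splits)
  show ?thesis
    unfolding PiE_insert_eq sum.reindex[OF inj] sum.cartesian_product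
    by (simp add: split_def)
qed




definition pathsum :: "nat \<Rightarrow> (nat \<Rightarrow> nat \<Rightarrow> nat \<Rightarrow> 'a::ab_group_add \<Rightarrow> 'a) \<Rightarrow> nat \<Rightarrow> nat \<Rightarrow> nat \<Rightarrow> 'a \<Rightarrow> 'a" where
 "pathsum N A m i j x = (\<Sum>q \<in> {0..m} \<rightarrow>\<^sub>E {0..<N}.
     if q 0 = i \<and> q m = j then comp_ops (\<lambda>k. A k (q k) (q (Suc k))) m x else 0)"

lemma pathsum_0: "pathsum N A 0 i j x = (if i = j \<and> i < N then x else 0)"
proof -
  have "pathsum N A 0 i j x = (\<Sum>y\<in>{0..<N}. if y = i \<and> y = j then x else 0)"
  proof -
    have e: "{0..0::nat} = insert 0 {}" by simp
    show ?thesis unfolding pathsum_def e apply (subst sum_PiE_insert) apply simp apply simp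
      apply (simp only: PiE_empty_domain fun_upd_same comp_ops_0 id_apply) apply simp
      done
  qed
  also have "\<dots> = (if i = j \<and> i < N then x else 0)"
    by (cases "i = j") (auto simp: sum.delta intro: sum.neutral)
  finally show ?thesis .
qed

lemma pathsum_Suc:
  assumes "j < N"
  shows "pathsum N A (Suc m) i j x = (\<Sum>l<N. pathsum N A m i l (A m l j x))"
proof -
  let ?c = "\<lambda>g. comp_ops (\<lambda>k. A k (g k) (g (Suc k))) m"
  have ins: "{0..Suc m} = insert (Suc m) {0..m}" by auto
  have "pathsum N A (Suc m) i j x =
     (\<Sum>y\<in>{0..<N}. \<Sum>g\<in>{0..m} \<rightarrow>\<^sub>E {0..<N}. if g 0 = i \<and> y = j then ?c g (A m (g m) y x) else 0)"
    unfolding pathsum_def ins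
  proof (subst sum_PiE_insert, simp, simp, intro sum.cong refl)
    fix y g
    have H: "comp_ops (\<lambda>k. A k ((g(Suc m := y)) k) ((g(Suc m := y)) (Suc k))) m = ?c g"
      by (rule comp_ops_cong) simp
    have F: "(g(Suc m := y)) 0 = g 0" "(g(Suc m:=y)) (Suc m) = y" "(g(Suc m:=y)) m = g m" by auto
    then show "(if (g(Suc m := y)) 0 = i \<and> (g(Suc m := y)) (Suc m) = j
          then comp_ops (\<lambda>k. A k ((g(Suc m := y)) k) ((g(Suc m := y)) (Suc k))) (Suc m) x else 0) =
         (if g 0 = i \<and> y = j then ?c g (A m (g m) y x) else 0)"
      by (simp only: comp_ops_Suc H F comp_apply)
  qed
  also have "\<dots> = (\<Sum>g\<in>{0..m} \<rightarrow>\<^sub>E {0..<N}. if g 0 = i then ?c g (A m (g m) j x) else 0)"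
    apply (subst sum.swap)
    apply (intro sum.cong refl)
    using assms by (simp add: if_distrib sum.delta' cong: if_cong) 
  also have "\<dots> = (\<Sum>g\<in>{0..m} \<rightarrow>\<^sub>E {0..<N}. \<Sum>l<N. if g 0 = i \<and> g m = l then ?c g (A m l j x) else 0)"
  proof (intro sum.cong refl)
    fix g assume g: "g \<in> {0..m} \<rightarrow>\<^sub>E {0..<N}"
    then have "g m < N" by (auto simp: PiE_iff)
    then show "(if g 0 = i then ?c g (A m (g m) j x) else 0) =
      (\<Sum>l<N. if g 0 = i \<and> g m = l then ?c g (A m l j x) else 0)"
      by (simp add: sum.delta cong: if_cong)
  qed
  also have "\<dots> = (\<Sum>l<N. pathsum N A m i l (A m l j x))"
    unfolding pathsum_def by (rule sum.swap)
  finally show ?thesis .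
qed

lemma pathsum_additive:
  assumes "\<And>k a b. k < m \<Longrightarrow> additive (A k a b)"
  shows "additive (pathsum N A m i j)"
  unfolding additive_def
proof (intro allI)
  fix x y
  have "\<And>q. additive (comp_ops (\<lambda>k. A k (q k) (q (Suc k))) m)"
    using assms by (intro comp_ops_additive) auto
  then show "pathsum N A m i j (x + y) = pathsum N A m i j x + pathsum N A m i j y"
    unfolding pathsum_def additive_def by (simp add: sum.distrib[symmetric] if_distrib cong: if_cong)
qed

lemma ops_path:
  assumes "\<And>k v. k < m \<Longrightarrow> ops k v = (\<lambda>i. if i < N then \<Sum>b<N. A k i b (v b) else 0)"
    and "\<And>k a b. k < m \<Longrightarrow> additive (A k a b)"
  shows "i < N \<Longrightarrow> comp_ops ops m v i = (\<Sum>b<N. pathsum N A m i b (v b))"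
  using assms
proof (induction m arbitrary: v)
  case 0
  then show ?case by (simp add: pathsum_0 sum.delta)
next
  case (Suc m)
  have add: "additive (pathsum N A m i l)" for l
    using Suc.prems by (intro pathsum_additive) auto
  have "comp_ops ops (Suc m) v i = comp_ops ops m (ops m v) i" by (simp add: comp_ops_Suc)
  also have "\<dots> = (\<Sum>l<N. pathsum N A m i l (ops m v l))"
    using Suc by auto
  also have "\<dots> = (\<Sum>l<N. \<Sum>b<N. pathsum N A m i l (A m l b (v b)))"
    using Suc.prems by (simp add: additive_sum[OF add])
  also have "\<dots> = (\<Sum>b<N. pathsum N A (Suc m) i b (v b))"
    by (subst sum.swap) (simp add: pathsum_Suc)
  finally show ?case .
qed




lemma fun_sum_apply: "(\<Sum>i\<in>I. F i) x = (\<Sum>i\<in>I. F i x)"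
  by (induction I rule: infinite_finite_induct) auto

lemma fun_sum_list_apply: "(sum_list (map G L)) x = sum_list (map (\<lambda>b. G b x) L)"
  by (induction L) auto

lemma sum_list_sum_swap: fixes F :: "_ \<Rightarrow> _ \<Rightarrow> 'c::comm_monoid_add" shows
  "sum_list (map (\<lambda>a. \<Sum>i\<in>I. F a i) L) = (\<Sum>i\<in>I. sum_list (map (\<lambda>a. F a i) L))"
  by (induction L) (auto simp: sum.distrib)

lemma sum_list_swap: fixes F :: "_ \<Rightarrow> _ \<Rightarrow> 'c::comm_monoid_add" shows
  "sum_list (map (\<lambda>a. sum_list (map (\<lambda>b. F a b) L2)) L1) = sum_list (map (\<lambda>b. sum_list (map (\<lambda>a. F a b) L1)) L2)"
  proof (induction L1)
  case (Cons a L1)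
  have "(\<Sum>b\<leftarrow>L2. F a b + (\<Sum>a\<leftarrow>L1. F a b)) = (\<Sum>b\<leftarrow>L2. F a b) + (\<Sum>b\<leftarrow>L2. \<Sum>a\<leftarrow>L1. F a b)"
    by (simp add: sum_list_addf)
  then show ?case using Cons by simp
qed simp

lemma sum_list_mult: "sum_list (map F L) * (c::'a::comm_ring_1) = sum_list (map (\<lambda>a. F a * c) L)"
  by (induction L) (auto simp: algebra_simps)

lemma mult_sum_list: "(c::'a::comm_ring_1) * sum_list (map F L) = sum_list (map (\<lambda>a. c * F a) L)"
  by (induction L) (auto simp: algebra_simps)

lemma onadd_0: fixes M :: "'a::ab_group_add set" shows "\<forall>y\<in>M. \<forall>z\<in>M. f (y + z) = f y + f z \<Longrightarrow> 0 \<in> M \<Longrightarrow> f 0 = (0::'b::ab_group_add)"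
proof -
  assume a: "\<forall>y\<in>M. \<forall>z\<in>M. f (y + z) = f y + f z" "0 \<in> M"
  then have "f (0 + 0) = f 0 + f 0" by blast
  then show ?thesis by simp
qed

lemma onadd_sum_list:
  fixes M :: "'a::ab_group_add set"
  assumes "\<forall>y\<in>M. \<forall>z\<in>M. f (y + z) = f y + f z" "0 \<in> M" "\<forall>y\<in>M. \<forall>z\<in>M. y + z \<in> M"
    "\<forall>a\<in>set L. G a \<in> M"
  shows "sum_list (map G L) \<in> M \<and> f (sum_list (map G L)) = sum_list (map (\<lambda>a. (f::_\<Rightarrow>'b::ab_group_add) (G a)) L)"
  using assms(4)
proof (induction L)
  case Nil then show ?case using onadd_0[OF assms(1,2)] assms(2) by simp
next
  case (Cons a L)
  then have h: "G a \<in> M" "sum_list (map G L) \<in> M" "f (sum_list (map G L)) = sum_list (map (\<lambda>a. f (G a)) L)" by auto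
  show ?case using assms(1,3) h by simp
qed

lemma onadd_sum:
  fixes M :: "'a::ab_group_add set"
  assumes "\<forall>y\<in>M. \<forall>z\<in>M. f (y + z) = f y + f z" "0 \<in> M" "\<forall>y\<in>M. \<forall>z\<in>M. y + z \<in> M"
    "\<forall>a\<in>I. G a \<in> M"
  shows "(\<Sum>a\<in>I. G a) \<in> M \<and> f (\<Sum>a\<in>I. G a) = (\<Sum>a\<in>I. (f::_\<Rightarrow>'b::ab_group_add) (G a))"
  using assms(4)
proof (induction I rule: infinite_finite_induct)
  case (infinite A) then show ?case using onadd_0[OF assms(1,2)] assms(2) by simp
next
  case empty then show ?case using onadd_0[OF assms(1,2)] assms(2) by simp
next
  case (insert a I)
  then have h: "G a \<in> M" "(\<Sum>a\<in>I. G a) \<in> M" "f (\<Sum>a\<in>I. G a) = (\<Sum>a\<in>I. f (G a))" by auto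
  show ?case using assms(1,3) h insert.hyps by simp
qed

lemma tideal_0: "0 \<in> tideal t n"
  unfolding tideal_def by (rule CollectI, rule exI[of _ "\<lambda>_. 0"]) simp

lemma tideal_add: "x \<in> tideal t n \<Longrightarrow> y \<in> tideal t n \<Longrightarrow> x + y \<in> tideal t n"
proof -
  assume "x \<in> tideal t n" "y \<in> tideal t n"
  then obtain c c' where "x = (\<Sum>i<n. c i * t i)" "y = (\<Sum>i<n. c' i * t i)" unfolding tideal_def by auto
  then have "x + y = (\<Sum>i<n. (\<lambda>i. c i + c' i) i * t i)" by (simp add: sum.distrib distrib_right)
  then show ?thesis unfolding tideal_def by (intro CollectI exI[of _ "\<lambda>i. c i + c' i"])
qed

lemma tideal_mult: "x \<in> tideal t n \<Longrightarrow> r * x \<in> tideal t n"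
proof -
  assume "x \<in> tideal t n"
  then obtain c where "x = (\<Sum>i<n. c i * t i)" unfolding tideal_def by auto
  then have "r * x = (\<Sum>i<n. (\<lambda>i. r * c i) i * t i)" by (simp add: sum_distrib_left mult.assoc)
  then show ?thesis unfolding tideal_def by (intro CollectI exI[of _ "\<lambda>i. r * c i"])
qed

lemma tideal_neg: "x \<in> tideal t n \<Longrightarrow> - x \<in> tideal t n"
  using tideal_mult[of x t n "-1"] by simp

lemma tideal_diff: "x \<in> tideal t n \<Longrightarrow> y \<in> tideal t n \<Longrightarrow> x - y \<in> tideal t n"
  using tideal_add tideal_neg by (metis diff_conv_add_uminus)

lemma tideal_sum: "(\<And>i. i \<in> I \<Longrightarrow> F i \<in> tideal t n) \<Longrightarrow> (\<Sum>i\<in>I. F i) \<in> tideal t n"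
  by (induction I rule: infinite_finite_induct) (auto simp: tideal_0 tideal_add)

lemma rm_0: "ring_morphism \<phi> \<Longrightarrow> \<phi> 0 = 0"
  unfolding ring_morphism_def by (metis add_0 add_cancel_right_right)

lemma rm_neg: "ring_morphism \<phi> \<Longrightarrow> \<phi> (- a) = - \<phi> a"
  using rm_0 unfolding ring_morphism_def by (metis add.right_inverse add_eq_0_iff)

lemma rm_of_nat: "ring_morphism \<phi> \<Longrightarrow> \<phi> (of_nat k) = of_nat k"
  by (induction k) (auto simp: rm_0, simp add: ring_morphism_def)

lemma rm_of_int: "\<phi> (of_int z) = of_int z" if "ring_morphism \<phi>"
proof (cases z rule: int_cases2)
  case (nonneg k) then show ?thesis using that by (simp add: rm_of_nat)
next
  case (nonpos k) then show ?thesis using that by (simp add: rm_of_nat rm_neg)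
qed

lemma rm_mult: "ring_morphism \<phi> \<Longrightarrow> \<phi> (a * b) = \<phi> a * \<phi> b"
  unfolding ring_morphism_def by blast

lemma rm_pow: "ring_morphism \<phi> \<Longrightarrow> \<phi> (a ^ k) = \<phi> a ^ k"
  by (induction k) (auto simp: rm_mult, simp add: ring_morphism_def)

definition qR :: "('r \<times> ('r \<Rightarrow> 's::comm_ring_1)) list \<Rightarrow> ('r \<Rightarrow> 'r) \<Rightarrow> 's" where
  "qR B h = (\<Sum>(y, f)\<leftarrow>B. f (h y))"

lemma qR_sum:
  assumes "is_dual_basis (\<lambda>a x. \<phi> a * x) UNIV (tideal t n) B"
  shows "qR B (\<lambda>x. \<Sum>i\<in>I. h i x) = (\<Sum>i\<in>I. qR B (h i))"
proof -
  have "\<And>y f. (y, f) \<in> set B \<Longrightarrow> f (\<Sum>i\<in>I. h i y) = (\<Sum>i\<in>I. f (h i y))"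
    using assms unfolding is_dual_basis_def
    by (intro conjunct2[OF onadd_sum[where M=UNIV]]) auto
  then have "qR B (\<lambda>x. \<Sum>i\<in>I. h i x) = (\<Sum>(y, f)\<leftarrow>B. \<Sum>i\<in>I. f (h i y))"
    unfolding qR_def by (intro arg_cong[where f=sum_list] map_cong) auto
  also have "\<dots> = (\<Sum>i\<in>I. qR B (h i))"
    unfolding qR_def split_def by (rule sum_list_sum_swap)
  finally show ?thesis .
qed

lemma qR_smult:
  assumes "is_dual_basis (\<lambda>a x. \<phi> a * x) UNIV (tideal t n) B"
  shows "qR B (\<lambda>x. \<phi> s * h x) = s * qR B h"
proof -
  have "qR B (\<lambda>x. \<phi> s * h x) = (\<Sum>(y, f)\<leftarrow>B. s * f (h y))"
    using assms unfolding qR_def is_dual_basis_def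
    by (intro arg_cong[where f=sum_list] map_cong) auto
  then show ?thesis unfolding qR_def split_def by (simp add: mult_sum_list)
qed




definition Ev :: "nat \<Rightarrow> 'r::zero \<Rightarrow> nat \<Rightarrow> 'r" where "Ev c r = (\<lambda>i. if i = c then r else 0)"

lemma vecs_0: "0 \<in> vecs N" by (simp add: vecs_def)
lemma vecs_add: "x \<in> vecs N \<Longrightarrow> y \<in> vecs N \<Longrightarrow> x + y \<in> vecs N" by (simp add: vecs_def)
lemma vecs_Ev: "c < N \<Longrightarrow> Ev c r \<in> vecs N" by (simp add: vecs_def Ev_def)
lemma tvecs_Ev: "c < N \<Longrightarrow> r \<in> tideal t n \<Longrightarrow> Ev c r \<in> tvecs t n N"
  by (auto simp: tvecs_def vecs_def Ev_def tideal_0)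
lemma vec_sc_Ev: "ring_morphism \<phi> \<Longrightarrow> vec_sc \<phi> s (Ev c y) = Ev c (\<phi> s * y)"
  by (auto simp: vec_sc_def Ev_def fun_eq_iff rm_0)

lemma additive_diff: "h (a - b) = h a - h b" if ad: "additive h"
proof -
  have "h (a + - b) = h a + h (- b)" using ad[unfolded additive_def, rule_format, of a "-b"] .
  then show ?thesis using additive_neg[OF ad, of b] by simp
qed

lemma dual_basisD:
  assumes "is_dual_basis sc M K B" "(x, f) \<in> set B"
  shows "x \<in> M" "\<forall>y\<in>M. \<forall>z\<in>M. f (y + z) = f y + f z" "\<forall>a. \<forall>y\<in>M. f (sc a y) = a * f y" "\<forall>y\<in>K. f y = 0"
proof -
  have "\<forall>(x, f) \<in> set B. x \<in> M \<and> (\<forall>y\<in>M. \<forall>z\<in>M. f (y + z) = f y + f z)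
        \<and> (\<forall>a. \<forall>y\<in>M. f (sc a y) = a * f y) \<and> (\<forall>y\<in>K. f y = 0)"
    using assms(1) unfolding is_dual_basis_def by (rule conjunct1)
  then have "case (x, f) of (x, f) \<Rightarrow> x \<in> M \<and> (\<forall>y\<in>M. \<forall>z\<in>M. f (y + z) = f y + f z)
        \<and> (\<forall>a. \<forall>y\<in>M. f (sc a y) = a * f y) \<and> (\<forall>y\<in>K. f y = 0)"
    using assms(2) by (rule bspec)
  then have "x \<in> M \<and> (\<forall>y\<in>M. \<forall>z\<in>M. f (y + z) = f y + f z)
        \<and> (\<forall>a. \<forall>y\<in>M. f (sc a y) = a * f y) \<and> (\<forall>y\<in>K. f y = 0)"
    unfolding prod.case .
  note h = this
  show "x \<in> M" using h by (elim conjE)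
  show "\<forall>y\<in>M. \<forall>z\<in>M. f (y + z) = f y + f z" using h by (elim conjE)
  show "\<forall>a. \<forall>y\<in>M. f (sc a y) = a * f y" using h by (elim conjE)
  show "\<forall>y\<in>K. f y = 0" using h by (elim conjE)
qed

lemma dual_basisR:
  assumes "is_dual_basis sc M K B" "y \<in> M"
  shows "y - (\<Sum>(x, f)\<leftarrow>B. sc (f y) x) \<in> K"
proof -
  have "\<forall>y\<in>M. y - (\<Sum>(x, f)\<leftarrow>B. sc (f y) x) \<in> K"
    using assms(1) unfolding is_dual_basis_def by (rule conjunct2)
  then show ?thesis using assms(2) by (rule bspec)
qed

lemma trace_X:
  fixes \<phi> :: "'s::comm_ring_1 \<Rightarrow> 'r::comm_ring_1"
  assumes rm: "ring_morphism \<phi>"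
    and BR: "is_dual_basis (\<lambda>a x. \<phi> a * x) UNIV (tideal t n) BR"
    and BX: "is_dual_basis (vec_sc \<phi>) (vecs N) (tvecs t n N) BX"
    and gv: "\<And>v. v \<in> vecs N \<Longrightarrow> g v \<in> vecs N"
    and gH: "\<And>v c. v \<in> vecs N \<Longrightarrow> c < N \<Longrightarrow> g v c = (\<Sum>b<N. H c b (v b))"
    and Hadd: "\<And>c b. additive (H c b)"
    and Hlin: "\<And>c b s x. H c b (\<phi> s * x) = \<phi> s * H c b x"
    and Hid: "\<And>c b x. x \<in> tideal t n \<Longrightarrow> H c b x \<in> tideal t n"
  shows "(\<Sum>(x,f)\<leftarrow>BX. f (g x)) = (\<Sum>c<N. \<Sum>(y,h)\<leftarrow>BR. h (H c c y))"
proof -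
  have BXm: "x \<in> vecs N" and BXa: "\<forall>y\<in>vecs N. \<forall>z\<in>vecs N. f (y + z) = f y + f z"
    and BXl: "\<And>a y. y \<in> vecs N \<Longrightarrow> f (vec_sc \<phi> a y) = a * f y"
    and BXk: "\<And>y. y \<in> tvecs t n N \<Longrightarrow> f y = 0" if "(x, f) \<in> set BX" for x f
    using dual_basisD[OF BX that] by auto
  have BXr: "y - (\<Sum>(x, f)\<leftarrow>BX. vec_sc \<phi> (f y) x) \<in> tvecs t n N" if "y \<in> vecs N" for y
    using dual_basisR[OF BX that] .
  have BRa: "additive h" and BRl: "\<And>a y. h (\<phi> a * y) = a * h y"
    and BRk: "\<And>y. y \<in> tideal t n \<Longrightarrow> h y = 0" if "(y, h) \<in> set BR" for y h
    using dual_basisD[OF BR that] unfolding additive_def by auto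
  have BRr: "r - (\<Sum>(y, h)\<leftarrow>BR. \<phi> (h r) * y) \<in> tideal t n" for r
    using dual_basisR[OF BR] by simp
  have tv: "tvecs t n N \<subseteq> vecs N" by (auto simp: tvecs_def)
  have vsc: "vec_sc \<phi> a v \<in> vecs N" if "v \<in> vecs N" for a v
    using that rm_0[OF rm] by (simp add: vecs_def vec_sc_def)

  have stepa: "f (Ev c r) = (\<Sum>(y, h)\<leftarrow>BR. h r * f (Ev c y))" if xf: "(x, f) \<in> set BX" and c: "c < N" for x f c r
  proof -
    define k where "k = r - (\<Sum>(y, h)\<leftarrow>BR. \<phi> (h r) * y)"
    have k: "k \<in> tideal t n" using BRr k_def by simp
    define S where "S = (\<Sum>(y, h)\<leftarrow>BR. vec_sc \<phi> (h r) (Ev c y))"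
    have e: "Ev c r = Ev c k + S"
      by (auto simp: S_def fun_eq_iff Ev_def k_def fun_sum_list_apply split_def vec_sc_def rm_0[OF rm])
    have S: "S \<in> vecs N \<and> f S = (\<Sum>(y, h)\<leftarrow>BR. f (vec_sc \<phi> (h r) (Ev c y)))"
      unfolding split_def S_def
      by (rule onadd_sum_list[OF BXa[OF xf] vecs_0]) (auto simp: vecs_add vsc vecs_Ev c)
    have z: "f (Ev c k) = 0" using BXk[OF xf tvecs_Ev[OF c k]] .
    have m: "(\<Sum>(y, h)\<leftarrow>BR. f (vec_sc \<phi> (h r) (Ev c y))) = (\<Sum>(y, h)\<leftarrow>BR. h r * f (Ev c y))"
      by (intro arg_cong[where f=sum_list] map_cong refl) (auto simp: BXl[OF xf] vecs_Ev c)
    have "Ev c k \<in> vecs N" using tv tvecs_Ev[OF c k] by blast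
    have S1: "S \<in> vecs N" using S by (rule conjunct1)
    have S2: "f S = (\<Sum>(y, h)\<leftarrow>BR. f (vec_sc \<phi> (h r) (Ev c y)))" using S by (rule conjunct2)
    have "f (Ev c r) = f (Ev c k) + f S" unfolding e by (rule bspec[OF bspec[OF BXa[OF xf]] S1]) fact
    also have "\<dots> = f S" by (simp only: z add_0)
    finally show ?thesis by (simp only: S2 m)
  qed
  have stepb: "(\<Sum>(x,f)\<leftarrow>BX. f (Ev c (H c b (x b)))) = (if b = c then (\<Sum>(y,h)\<leftarrow>BR. h (H c c y)) else 0)"
    if c: "c < N" and b: "b < N" for c b
  proof -
    have "(\<Sum>(x,f)\<leftarrow>BX. f (Ev c (H c b (x b)))) = (\<Sum>(x,f)\<leftarrow>BX. \<Sum>(y, h)\<leftarrow>BR. h (H c b (x b)) * f (Ev c y))"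
    proof (intro arg_cong[where f=sum_list] map_cong refl, clarify)
      fix x f assume "(x, f) \<in> set BX"
      then show "f (Ev c (H c b (x b))) = (\<Sum>(y, h)\<leftarrow>BR. h (H c b (x b)) * f (Ev c y))"
        by (rule stepa[OF _ c])
    qed
    also have "\<dots> = (\<Sum>(y, h)\<leftarrow>BR. \<Sum>(x,f)\<leftarrow>BX. h (H c b (x b)) * f (Ev c y))"
      unfolding split_def by (rule sum_list_swap)
    also have "\<dots> = (\<Sum>(y,h)\<leftarrow>BR. if b = c then h (H c c y) else 0)"
    proof (intro arg_cong[where f=sum_list] map_cong refl, clarify)
      fix y h assume yh: "(y, h) \<in> set BR"
      define w where "w = (\<Sum>(x, f)\<leftarrow>BX. vec_sc \<phi> (f (Ev c y)) x)"
      have wb: "w b = (\<Sum>(x, f)\<leftarrow>BX. \<phi> (f (Ev c y)) * x b)"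
        unfolding w_def by (simp add: fun_sum_list_apply split_def vec_sc_def)
      have "Ev c y - w \<in> tvecs t n N" unfolding w_def using BXr vecs_Ev c by blast
      then have kin: "Ev c y b - w b \<in> tideal t n" by (auto simp: tvecs_def)
      have hH: "additive (\<lambda>z. h (H c b z))"
        using BRa[OF yh] Hadd unfolding additive_def by simp
      have "(\<Sum>(x,f)\<leftarrow>BX. h (H c b (x b)) * f (Ev c y)) = (\<Sum>(x,f)\<leftarrow>BX. h (H c b (\<phi> (f (Ev c y)) * x b)))"
      proof (intro arg_cong[where f=sum_list] map_cong refl, clarify)
        fix x f
        have "h (H c b (\<phi> (f (Ev c y)) * x b)) = f (Ev c y) * h (H c b (x b))"
          by (simp only: Hlin BRl[OF yh])
        then show "h (H c b (x b)) * f (Ev c y) = h (H c b (\<phi> (f (Ev c y)) * x b))"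
          by (simp only: mult.commute)
      qed
      also have "\<dots> = h (H c b (w b))"
        unfolding wb split_def
        by (rule conjunct2[OF onadd_sum_list[where M=UNIV], symmetric]) (use hH in \<open>auto simp: additive_def\<close>)
      also have "\<dots> = h (H c b (Ev c y b))"
      proof -
        have "w b = Ev c y b - (Ev c y b - w b)" by simp
        then have "h (H c b (w b)) = h (H c b (Ev c y b)) - h (H c b (Ev c y b - w b))"
          using additive_diff[OF hH, of "Ev c y b" "Ev c y b - w b"] by simp
        then show ?thesis using BRk[OF yh Hid[OF kin]] by simp
      qed
      also have "\<dots> = (if b = c then h (H c c y) else 0)"
        using additive_0[OF hH] by (simp add: Ev_def)
      finally show "(\<Sum>(x,f)\<leftarrow>BX. h (H c b (x b)) * f (Ev c y)) = (if b = c then h (H c c y) else 0)" .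
    qed
    also have "\<dots> = (if b = c then (\<Sum>(y,h)\<leftarrow>BR. h (H c c y)) else 0)"
      by (induction BR) auto
    finally show ?thesis .
  qed
  have stepc: "f (g x) = (\<Sum>c<N. \<Sum>b<N. f (Ev c (H c b (x b))))" if xf: "(x, f) \<in> set BX" for x f
  proof -
    have xv: "x \<in> vecs N" using BXm[OF xf] .
    have "g x = (\<Sum>c<N. \<Sum>b<N. Ev c (H c b (x b)))"
    proof
      fix i
      show "g x i = (\<Sum>c<N. \<Sum>b<N. Ev c (H c b (x b))) i"
      proof (cases "i < N")
        case True
        have e1: "(\<Sum>b<N. Ev c (H c b (x b)) i) = (if i = c then (\<Sum>b<N. H c b (x b)) else 0)" for c
          by (simp add: Ev_def)
        have "(\<Sum>c<N. \<Sum>b<N. Ev c (H c b (x b))) i = (\<Sum>c<N. if i = c then (\<Sum>b<N. H c b (x b)) else 0)"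
          by (simp only: fun_sum_apply e1)
        also have "\<dots> = (\<Sum>b<N. H i b (x b))" using True by (simp add: sum.delta)
        finally show ?thesis using gH[OF xv True] by simp
      next
        case False
        then show ?thesis using gv[OF xv] by (auto simp: fun_sum_apply Ev_def vecs_def intro!: sum.neutral)
      qed
    qed
    note eqg = this
    have mem: "(\<Sum>b<N. Ev c (H c b (x b))) \<in> vecs N" if "c < N" for c
      by (rule conjunct1[OF onadd_sum[OF BXa[OF xf] vecs_0]]) (auto simp: vecs_add vecs_Ev that)
    have e2: "f (\<Sum>c<N. \<Sum>b<N. Ev c (H c b (x b))) = (\<Sum>c<N. f (\<Sum>b<N. Ev c (H c b (x b))))"
      by (rule conjunct2[OF onadd_sum[OF BXa[OF xf] vecs_0]]) (auto simp: vecs_add mem)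
    have e3: "f (\<Sum>b<N. Ev c (H c b (x b))) = (\<Sum>b<N. f (Ev c (H c b (x b))))" if "c < N" for c
      by (rule conjunct2[OF onadd_sum[OF BXa[OF xf] vecs_0]]) (auto simp: vecs_add vecs_Ev that)
    show ?thesis unfolding eqg e2 by (intro sum.cong refl) (simp add: e3)
  qed
  have "(\<Sum>(x,f)\<leftarrow>BX. f (g x)) = (\<Sum>(x,f)\<leftarrow>BX. \<Sum>c<N. \<Sum>b<N. f (Ev c (H c b (x b))))"
  proof (intro arg_cong[where f=sum_list] map_cong refl, clarify)
    fix x f assume "(x, f) \<in> set BX"
    then show "f (g x) = (\<Sum>c<N. \<Sum>b<N. f (Ev c (H c b (x b))))" by (rule stepc)
  qed
  also have "\<dots> = (\<Sum>c<N. \<Sum>b<N. \<Sum>(x,f)\<leftarrow>BX. f (Ev c (H c b (x b))))"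
    unfolding split_def by (simp only: sum_list_sum_swap)
  also have "\<dots> = (\<Sum>c<N. \<Sum>b<N. if b = c then (\<Sum>(y,h)\<leftarrow>BR. h (H c c y)) else 0)"
  proof (intro sum.cong refl)
    fix c b assume "c \<in> {..<N}" "b \<in> {..<N}"
    then show "(\<Sum>(x,f)\<leftarrow>BX. f (Ev c (H c b (x b)))) = (if b = c then (\<Sum>(y,h)\<leftarrow>BR. h (H c c y)) else 0)"
      using stepb by simp
  qed
  also have "\<dots> = (\<Sum>c<N. \<Sum>(y,h)\<leftarrow>BR. h (H c c y))"
    by (simp add: sum.delta')
  finally show ?thesis .
qed




lemma sum_list_concat': "sum_list (concat xss) = sum_list (map sum_list (xss :: 'a::monoid_add list list))"
  by (induction xss) auto

lemma sum_list_map_zero: "sum_list (map (\<lambda>p. 0::'a::monoid_add) L) = 0"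
  by (induction L) auto

lemma exists_BX:
  fixes \<phi> :: "'s::comm_ring_1 \<Rightarrow> 'r::comm_ring_1"
  assumes rm: "ring_morphism \<phi>"
    and BR: "is_dual_basis (\<lambda>a x. \<phi> a * x) UNIV (tideal t n) BR"
  shows "\<exists>B. is_dual_basis (vec_sc \<phi>) (vecs N) (tvecs t n N) B"
proof -
  define BX where "BX = concat (map (\<lambda>c. map (\<lambda>(y, f). (Ev c y, \<lambda>v. f (v c))) BR) [0..<N])"
  have memBX: "\<exists>c<N. \<exists>y f. (y, f) \<in> set BR \<and> x = Ev c y \<and> g = (\<lambda>v. f (v c))" if "(x, g) \<in> set BX" for x g
    using that unfolding BX_def by (auto, blast)
  have BRa: "\<forall>y\<in>UNIV. \<forall>z\<in>UNIV. f (y + z) = f y + f z" and BRl: "\<forall>a. \<forall>y\<in>UNIV. f (\<phi> a * y) = a * f y"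
    and BRk: "\<forall>y\<in>tideal t n. f y = 0" if "(y, f) \<in> set BR" for y f
    using dual_basisD[OF BR that] by simp_all
  have part1: "\<forall>(x, g) \<in> set BX. x \<in> vecs N \<and> (\<forall>y\<in>vecs N. \<forall>z\<in>vecs N. g (y + z) = g y + g z)
        \<and> (\<forall>a. \<forall>y\<in>vecs N. g (vec_sc \<phi> a y) = a * g y) \<and> (\<forall>y\<in>tvecs t n N. g y = 0)"
  proof (clarify)
    fix x g assume "(x, g) \<in> set BX"
    then obtain c y f where c: "c < N" and yf: "(y, f) \<in> set BR" and x: "x = Ev c y" and g: "g = (\<lambda>v. f (v c))"
      using memBX by blast
    have "x \<in> vecs N" using x c by (simp add: vecs_Ev)
    moreover have "\<forall>u\<in>vecs N. \<forall>v\<in>vecs N. g (u + v) = g u + g v"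
      using BRa[OF yf] g by simp
    moreover have "\<forall>a. \<forall>u\<in>vecs N. g (vec_sc \<phi> a u) = a * g u"
      using BRl[OF yf] g by (simp add: vec_sc_def)
    moreover have "\<forall>u\<in>tvecs t n N. g u = 0"
      using BRk[OF yf] g by (simp add: tvecs_def)
    ultimately show "x \<in> vecs N \<and> (\<forall>u\<in>vecs N. \<forall>v\<in>vecs N. g (u + v) = g u + g v)
        \<and> (\<forall>a. \<forall>u\<in>vecs N. g (vec_sc \<phi> a u) = a * g u) \<and> (\<forall>u\<in>tvecs t n N. g u = 0)" by blast
  qed
  have part2: "v - (\<Sum>(x, g)\<leftarrow>BX. vec_sc \<phi> (g v) x) \<in> tvecs t n N" if v: "v \<in> vecs N" for v
  proof -
    define w where "w = (\<Sum>(x, g)\<leftarrow>BX. vec_sc \<phi> (g v) x)"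
    have w1: "w = (\<Sum>c<N. \<Sum>(y, f)\<leftarrow>BR. vec_sc \<phi> (f (v c)) (Ev c y))"
      unfolding w_def BX_def
      by (simp add: sum_list_concat' map_concat comp_def split_def
          sum_set_upt_conv_sum_list_nat[symmetric] atLeast0LessThan)
    have w2: "w i = (if i < N then (\<Sum>(y, f)\<leftarrow>BR. \<phi> (f (v i)) * y) else 0)" for i
    proof -
      have "w i = (\<Sum>c<N. \<Sum>(y, f)\<leftarrow>BR. \<phi> (f (v c)) * (if i = c then y else 0))"
        unfolding w1 fun_sum_apply by (simp add: fun_sum_list_apply split_def vec_sc_def Ev_def rm_0[OF rm])
      also have "\<dots> = (\<Sum>c<N. if i = c then (\<Sum>(y, f)\<leftarrow>BR. \<phi> (f (v c)) * y) else 0)"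
      proof (intro sum.cong refl)
        fix c
        show "(\<Sum>(y, f)\<leftarrow>BR. \<phi> (f (v c)) * (if i = c then y else 0)) = (if i = c then (\<Sum>(y, f)\<leftarrow>BR. \<phi> (f (v c)) * y) else 0)"
          by (cases "i = c") (simp_all add: split_def sum_list_map_zero)
      qed
      also have "\<dots> = (if i < N then (\<Sum>(y, f)\<leftarrow>BR. \<phi> (f (v i)) * y) else 0)"
        by (simp add: sum.delta)
      finally show ?thesis .
    qed
    have "(v - w) i \<in> tideal t n" for i
    proof (cases "i < N")
      case True
      then show ?thesis using w2 dual_basisR[OF BR, of "v i"] by simp
    next
      case False
      then show ?thesis using w2 v by (simp add: vecs_def tideal_0)
    qed
    moreover have "v - w \<in> vecs N" using w2 v by (simp add: vecs_def)
    ultimately show ?thesis unfolding w_def[symmetric] tvecs_def by blast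
  qed
  have "is_dual_basis (vec_sc \<phi>) (vecs N) (tvecs t n N) BX"
    unfolding is_dual_basis_def using part1 part2 by blast
  then show ?thesis by blast
qed

definition good :: "('s::comm_ring_1 \<Rightarrow> 'r::comm_ring_1) \<Rightarrow> (nat \<Rightarrow> 'r) \<Rightarrow> nat \<Rightarrow> ('r \<Rightarrow> 'r) \<Rightarrow> bool" where
  "good \<phi> t n h \<longleftrightarrow> additive h \<and> (\<forall>s x. h (\<phi> s * x) = \<phi> s * h x) \<and> (\<forall>x\<in>tideal t n. h x \<in> tideal t n)"

lemma good_id: "good \<phi> t n id"
  by (simp add: good_def additive_def)

lemma good_comp: "good \<phi> t n f \<Longrightarrow> good \<phi> t n g \<Longrightarrow> good \<phi> t n (f \<circ> g)"
  unfolding good_def additive_def by simp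

lemma good_comp_ops: "(\<And>k. k < m \<Longrightarrow> good \<phi> t n (ops k)) \<Longrightarrow> good \<phi> t n (comp_ops ops m)"
  by (induction m) (auto simp: comp_ops_Suc good_id good_comp)

lemma good_sum: "(\<And>i. i \<in> I \<Longrightarrow> good \<phi> t n (h i)) \<Longrightarrow> good \<phi> t n (\<lambda>x. \<Sum>i\<in>I. h i x)"
proof (induction I rule: infinite_finite_induct)
  case (infinite A) then show ?case by (simp add: good_def additive_def tideal_0)
next
  case empty then show ?case by (simp add: good_def additive_def tideal_0)
next
  case (insert a I)
  then have g1: "good \<phi> t n (h a)" and g2: "good \<phi> t n (\<lambda>x. \<Sum>i\<in>I. h i x)" by auto
  show ?case using insert.hyps g1 g2 unfolding good_def additive_def
    by (auto simp: distrib_left tideal_add)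
qed

lemma good_cmult: "good \<phi> t n h \<Longrightarrow> good \<phi> t n (\<lambda>x. r * h x)"
  unfolding good_def additive_def by (auto simp: distrib_left tideal_mult mult.left_commute)

lemma good_if: "good \<phi> t n h \<Longrightarrow> ring_morphism \<phi> \<Longrightarrow> good \<phi> t n (\<lambda>x. if P then h x else 0)"
  by (cases P) (auto simp: good_def additive_def tideal_0)

lemma good_pathsum: "(\<And>k a b. k < m \<Longrightarrow> good \<phi> t n (A k a b)) \<Longrightarrow> ring_morphism \<phi> \<Longrightarrow>
   good \<phi> t n (pathsum N A m i j)"
  unfolding pathsum_def
  by (intro good_sum good_if good_comp_ops) auto

lemma conn_additive: "is_connection \<phi> t n D \<Longrightarrow> j < n \<Longrightarrow> additive (D j)"
  unfolding is_connection_def additive_def by blast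

lemma dcomm_good:
  assumes rm: "ring_morphism \<phi>" and con: "is_connection \<phi> t n D" and j: "j < n"
  shows "good \<phi> t n (dcomm D j r)"
proof -
  have add: "additive (D j)" using conn_additive[OF con j] .
  have lin: "D j (\<phi> s * x) = \<phi> s * D j x" for s x using con j unfolding is_connection_def by blast
  have tt: "D j (t k * x) = t k * D j x + (if j = k then x else 0)" if "k < n" for k x
    using con j that unfolding is_connection_def by blast
  have "additive (dcomm D j r)"
    unfolding additive_def dcomm_def using add unfolding additive_def by (simp add: distrib_left)
  moreover have "dcomm D j r (\<phi> s * x) = \<phi> s * dcomm D j r x" for s x
    unfolding dcomm_def
    by (metis (no_types, lifting) lin mult.left_commute right_diff_distrib)
  moreover have "dcomm D j r x \<in> tideal t n" if xin: "x \<in> tideal t n" for x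
  proof -
    obtain c where x: "x = (\<Sum>i<n. c i * t i)" using xin unfolding tideal_def by auto
    have e1: "D j (r * x) = (\<Sum>i<n. t i * D j (r * c i) + (if j = i then r * c i else 0))"
      unfolding x sum_distrib_left additive_sum[OF add]
    proof (intro sum.cong refl)
      fix i assume "i \<in> {..<n}"
      then have i: "i < n" by simp
      have e: "r * (c i * t i) = t i * (r * c i)" by (simp add: ac_simps)
      show "D j (r * (c i * t i)) = t i * D j (r * c i) + (if j = i then r * c i else 0)"
        unfolding e by (rule tt[OF i])
    qed
    have e2: "r * D j x = (\<Sum>i<n. r * (t i * D j (c i) + (if j = i then c i else 0)))"
      unfolding x additive_sum[OF add] sum_distrib_left
    proof (intro sum.cong refl)
      fix i assume "i \<in> {..<n}"
      then have i: "i < n" by simp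
      have e: "c i * t i = t i * c i" by (simp add: ac_simps)
      show "r * D j (c i * t i) = r * (t i * D j (c i) + (if j = i then c i else 0))"
        unfolding e by (simp only: tt[OF i])
    qed
    have "dcomm D j r x = (\<Sum>i<n. (\<lambda>i. D j (r * c i) - r * D j (c i)) i * t i)"
      unfolding dcomm_def e1 e2 sum_subtractf[symmetric]
      by (intro sum.cong refl) (simp add: algebra_simps)
    then show ?thesis unfolding tideal_def by (intro CollectI exI[of _ "\<lambda>i. D j (r * c i) - r * D j (c i)"])
  qed
  ultimately show ?thesis unfolding good_def by blast
qed

lemma atiyah_expand:
  assumes con: "is_connection \<phi> t n D" and j: "j < n"
  shows "atiyah N d D j v = (\<lambda>i. if i < N then \<Sum>b<N. (\<lambda>x. - dcomm D j (d i b) x) (v b) else 0)"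
proof
  fix i
  have add: "additive (D j)" using conn_additive[OF con j] .
  show "atiyah N d D j v i = (if i < N then \<Sum>b<N. (\<lambda>x. - dcomm D j (d i b) x) (v b) else 0)"
  proof (cases "i < N")
    case True
    then show ?thesis
      unfolding atiyah_def matop_def vecD_def dcomm_def
      by (simp add: additive_sum[OF add] sum_subtractf[symmetric])
  next
    case False
    then show ?thesis
      unfolding atiyah_def matop_def vecD_def by (simp add: additive_0[OF add])
  qed
qed




lemma core_identity:
  fixes T :: "'t \<Rightarrow> (nat \<Rightarrow> nat) \<Rightarrow> 'r::comm_ring_1"
  assumes fin: "finite P"
  shows "(\<Sum>c<N. \<epsilon> c * (\<Sum>a<N. \<alpha> c a * (\<Sum>\<tau>\<in>P. sg \<tau> * (s * (\<Sum>q\<in>{0..n} \<rightarrow>\<^sub>E {0..<N}. if q 0 = a \<and> q n = c then T \<tau> q else 0)))))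
    = s * (\<Sum>q\<in>{0..n} \<rightarrow>\<^sub>E {0..<N}. \<epsilon> (q n) * (\<Sum>\<tau>\<in>P. sg \<tau> * (\<alpha> (q n) (q 0) * T \<tau> q)))"
proof -
  let ?PE = "{0..n} \<rightarrow>\<^sub>E {0..<N}"
  let ?G = "\<lambda>q \<tau>. s * (\<epsilon> (q n) * (sg \<tau> * (\<alpha> (q n) (q 0) * T \<tau> q)))"
  have "(\<Sum>c<N. \<epsilon> c * (\<Sum>a<N. \<alpha> c a * (\<Sum>\<tau>\<in>P. sg \<tau> * (s * (\<Sum>q\<in>?PE. if q 0 = a \<and> q n = c then T \<tau> q else 0)))))
     = (\<Sum>c<N. \<Sum>a<N. \<Sum>\<tau>\<in>P. \<Sum>q\<in>?PE. if q 0 = a \<and> q n = c then \<epsilon> c * (\<alpha> c a * (sg \<tau> * (s * T \<tau> q))) else 0)"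
    by (simp add: sum_distrib_left if_distrib[where f="\<lambda>x. _ * x"] cong: if_cong)
  also have "\<dots> = (\<Sum>c<N. \<Sum>a<N. \<Sum>q\<in>?PE. \<Sum>\<tau>\<in>P. if q 0 = a \<and> q n = c then \<epsilon> c * (\<alpha> c a * (sg \<tau> * (s * T \<tau> q))) else 0)"
    by (intro sum.cong refl sum.swap)
  also have "\<dots> = (\<Sum>c<N. \<Sum>q\<in>?PE. \<Sum>a<N. \<Sum>\<tau>\<in>P. if q 0 = a \<and> q n = c then \<epsilon> c * (\<alpha> c a * (sg \<tau> * (s * T \<tau> q))) else 0)"
    by (intro sum.cong refl sum.swap)
  also have "\<dots> = (\<Sum>q\<in>?PE. \<Sum>c<N. \<Sum>a<N. \<Sum>\<tau>\<in>P. if q 0 = a \<and> q n = c then \<epsilon> c * (\<alpha> c a * (sg \<tau> * (s * T \<tau> q))) else 0)"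
    by (rule sum.swap)
  also have "\<dots> = (\<Sum>q\<in>?PE. \<Sum>\<tau>\<in>P. ?G q \<tau>)"
  proof (intro sum.cong refl)
    fix q assume q: "q \<in> ?PE"
    then have q0: "q 0 < N" and qn: "q n < N" by (auto simp: PiE_iff)
    have "(\<Sum>c<N. \<Sum>a<N. \<Sum>\<tau>\<in>P. if q 0 = a \<and> q n = c then \<epsilon> c * (\<alpha> c a * (sg \<tau> * (s * T \<tau> q))) else 0)
       = (\<Sum>c<N. if q n = c then (\<Sum>a<N. if q 0 = a then (\<Sum>\<tau>\<in>P. \<epsilon> c * (\<alpha> c a * (sg \<tau> * (s * T \<tau> q)))) else 0) else 0)"
    proof (intro sum.cong refl)
      fix c
      show "(\<Sum>a<N. \<Sum>\<tau>\<in>P. if q 0 = a \<and> q n = c then \<epsilon> c * (\<alpha> c a * (sg \<tau> * (s * T \<tau> q))) else 0)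
        = (if q n = c then (\<Sum>a<N. if q 0 = a then (\<Sum>\<tau>\<in>P. \<epsilon> c * (\<alpha> c a * (sg \<tau> * (s * T \<tau> q)))) else 0) else 0)"
      proof (cases "q n = c")
        case True
        show ?thesis unfolding if_P[OF True]
        proof (intro sum.cong refl)
          fix a show "(\<Sum>\<tau>\<in>P. if q 0 = a \<and> q n = c then \<epsilon> c * (\<alpha> c a * (sg \<tau> * (s * T \<tau> q))) else 0)
            = (if q 0 = a then (\<Sum>\<tau>\<in>P. \<epsilon> c * (\<alpha> c a * (sg \<tau> * (s * T \<tau> q)))) else 0)"
            using True by (cases "q 0 = a") simp_all
        qed
      next
        case False
        then show ?thesis by simp
      qed
    qed
    also have "\<dots> = (\<Sum>\<tau>\<in>P. \<epsilon> (q n) * (\<alpha> (q n) (q 0) * (sg \<tau> * (s * T \<tau> q))))"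
      using q0 qn by (simp only: sum.delta' finite_lessThan lessThan_iff if_True)
    also have "\<dots> = (\<Sum>\<tau>\<in>P. ?G q \<tau>)"
      by (intro sum.cong refl) (simp add: ac_simps)
    finally show "(\<Sum>c<N. \<Sum>a<N. \<Sum>\<tau>\<in>P. if q 0 = a \<and> q n = c then \<epsilon> c * (\<alpha> c a * (sg \<tau> * (s * T \<tau> q))) else 0)
       = (\<Sum>\<tau>\<in>P. ?G q \<tau>)" .
  qed
  also have "\<dots> = s * (\<Sum>q\<in>?PE. \<epsilon> (q n) * (\<Sum>\<tau>\<in>P. sg \<tau> * (\<alpha> (q n) (q 0) * T \<tau> q)))"
    by (simp add: sum_distrib_left)
  finally show ?thesis .
qed

definition rot :: "nat \<Rightarrow> (nat \<Rightarrow> nat) \<Rightarrow> nat \<Rightarrow> nat" where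
  "rot n p = (\<lambda>k. if k < n then p (Suc k) else if k = n then p 0 else undefined)"

definition rinv :: "nat \<Rightarrow> (nat \<Rightarrow> nat) \<Rightarrow> nat \<Rightarrow> nat" where
  "rinv n q = (\<lambda>k. if k = 0 then q n else if k \<le> n then q (k - 1) else undefined)"

lemma rot_reindex:
  "(\<Sum>q\<in>{0..n} \<rightarrow>\<^sub>E {0..<N}. G (rinv n q)) = (\<Sum>p\<in>{0..n} \<rightarrow>\<^sub>E {0..<N}. (G p :: 'a::comm_monoid_add))"
proof (rule sum.reindex_bij_witness[where i="rot n" and j="rinv n"])
  fix q assume q: "q \<in> {0..n} \<rightarrow>\<^sub>E {0..<N}"
  show "rot n (rinv n q) = q"
  proof
    fix k show "rot n (rinv n q) k = q k"
      using q by (auto simp: rot_def rinv_def PiE_iff extensional_def)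
  qed
  show "rinv n q \<in> {0..n} \<rightarrow>\<^sub>E {0..<N}"
    using q by (auto simp: rinv_def PiE_iff extensional_def)
next
  fix p assume p: "p \<in> {0..n} \<rightarrow>\<^sub>E {0..<N}"
  show "rinv n (rot n p) = p"
  proof
    fix k show "rinv n (rot n p) k = p k"
      using p by (auto simp: rot_def rinv_def PiE_iff extensional_def)
  qed
  show "rot n p \<in> {0..n} \<rightarrow>\<^sub>E {0..<N}"
    using p by (auto simp: rot_def PiE_iff extensional_def)
qed simp

lemma rinv_facts:
  "rinv n q 0 = q n"
  "rinv n q (if 0 = n then 0 else Suc 0) = q 0"
  "k < n \<Longrightarrow> rinv n q (Suc k) = q k"
  "k < n \<Longrightarrow> rinv n q (if Suc k = n then 0 else Suc (Suc k)) = q (Suc k)"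
  by (auto simp: rinv_def)




theorem proposition9p5:
  fixes \<phi> :: "'s::comm_ring_1 \<Rightarrow> 'r::comm_ring_1"
    and t :: "nat \<Rightarrow> 'r" and n :: nat
    and D :: "nat \<Rightarrow> 'r \<Rightarrow> 'r"
    and W :: 's and N :: nat and deg :: "nat \<Rightarrow> bool"
    and d \<alpha> :: "nat \<Rightarrow> nat \<Rightarrow> 'r"
  assumes "ring_morphism \<phi>"
    and "quasi_regular t n"
    and "fg_projective (\<lambda>a x. \<phi> a * x) UNIV (tideal t n)"
    and "is_connection \<phi> t n D"
    and "flat_connection n D"
    and "\<forall>r. \<exists>a b. r = a + b \<and> (\<forall>j<n. D j a = 0) \<and> b \<in> tideal t n"
    and "is_mf \<phi> W N deg d"
    and "\<forall>a<N. \<forall>b<N. \<alpha> a b \<noteq> 0 \<longrightarrow> (deg a = deg b) = even n"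
    and "\<forall>a<N. \<forall>b<N. (-1) ^ n * (\<Sum>c<N. d a c * \<alpha> c b) - (\<Sum>c<N. \<alpha> a c * d c b) \<in> tideal t n"
  shows "qtrace (vec_sc \<phi>) (vecs N) (tvecs t n N)
            (grading_op deg \<circ> matop N \<alpha> \<circ> atiyah_pow N d D n)
         = (-1) ^ n * res_str \<phi> t n D N deg d \<alpha>"
proof -
  have rm: "ring_morphism \<phi>" by fact
  have con: "is_connection \<phi> t n D" by fact
  define BR where "BR = (SOME B. is_dual_basis (\<lambda>a x. \<phi> a * x) UNIV (tideal t n) B)"
  have BR: "is_dual_basis (\<lambda>a x. \<phi> a * x) UNIV (tideal t n) BR"
    using assms(3) unfolding fg_projective_def BR_def by (rule someI_ex)
  define BX where "BX = (SOME B. is_dual_basis (vec_sc \<phi>) (vecs N) (tvecs t n N) B)"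
  have BX: "is_dual_basis (vec_sc \<phi>) (vecs N) (tvecs t n N) BX"
    using exists_BX[OF rm BR] unfolding BX_def by (rule someI_ex)
  have qtR: "qtrace (\<lambda>a x. \<phi> a * x) UNIV (tideal t n) h = qR BR h" for h
    unfolding qtrace_def qR_def BR_def Let_def ..
  have qtX: "qtrace (vec_sc \<phi>) (vecs N) (tvecs t n N) g = (\<Sum>(x, f)\<leftarrow>BX. f (g x))" for g
    unfolding qtrace_def BX_def Let_def ..
  define P where "P = {\<tau>. \<tau> permutes {0..<n}}"
  have finP: "finite P" unfolding P_def by (rule finite_permutations) simp
  have tau_lt: "\<tau> k < n" if "\<tau> \<in> P" "k < n" for \<tau> k
    using that permutes_in_image[of \<tau> "{0..<n}" k] unfolding P_def by simp
  define C where "C = (\<lambda>(\<tau>::nat\<Rightarrow>nat) (k::nat) i b. dcomm D (\<tau> k) (d i b))"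
  have Cgood: "good \<phi> t n (C \<tau> k i b)" if "\<tau> \<in> P" "k < n" for \<tau> k i b
    unfolding C_def using dcomm_good[OF rm con tau_lt[OF that]] .
  have Cadd: "additive (C \<tau> k i b)" if "\<tau> \<in> P" "k < n" for \<tau> k i b
    using Cgood[OF that] unfolding good_def by blast
  define T where "T = (\<lambda>\<tau> q. comp_ops (\<lambda>k. C \<tau> k (q k) (q (Suc k))) n)"
  have ps_neg: "pathsum N (\<lambda>k i b x. - C \<tau> k i b x) n a b x = (-1)^n * pathsum N (C \<tau>) n a b x"
    if "\<tau> \<in> P" for \<tau> a b x
  proof -
    have "comp_ops (\<lambda>k x. - C \<tau> k (q k) (q (Suc k)) x) n x = (-1)^n * comp_ops (\<lambda>k. C \<tau> k (q k) (q (Suc k))) n x" for q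
      by (rule comp_ops_neg) (rule Cadd[OF that])
    then show ?thesis unfolding pathsum_def
      by (simp add: sum_distrib_left if_distrib[where f="\<lambda>x. _ * x"] cong: if_cong)
  qed
  have comp_expand: "comp_ops (\<lambda>k. atiyah N d D (\<tau> k)) n v a = (\<Sum>b<N. (-1)^n * pathsum N (C \<tau>) n a b (v b))"
    if "\<tau> \<in> P" "a < N" for \<tau> v a
  proof -
    have "comp_ops (\<lambda>k. atiyah N d D (\<tau> k)) n v a = (\<Sum>b<N. pathsum N (\<lambda>k i b x. - C \<tau> k i b x) n a b (v b))"
    proof (rule ops_path[OF _ _ that(2)])
      fix k v assume k: "k < n"
      show "atiyah N d D (\<tau> k) v = (\<lambda>i. if i < N then \<Sum>b<N. - C \<tau> k i b (v b) else 0)"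
        unfolding C_def using atiyah_expand[OF con tau_lt[OF that(1) k]] by simp
    next
      fix k i b assume k: "k < n"
      show "additive (\<lambda>x. - C \<tau> k i b x)"
        using Cadd[OF that(1) k] unfolding additive_def by simp
    qed
    then show ?thesis using ps_neg[OF that(1)] by simp
  qed
  define \<epsilon> where "\<epsilon> = (\<lambda>c. if deg c then -1 else 1 :: 'r)"
  define \<epsilon>' where "\<epsilon>' = (\<lambda>c. if deg c then -1 else 1 :: 's)"
  define sg where "sg = (\<lambda>\<tau>::nat\<Rightarrow>nat. of_int (sign \<tau>) :: 'r)"
  define sg' where "sg' = (\<lambda>\<tau>::nat\<Rightarrow>nat. of_int (sign \<tau>) :: 's)"
  define H where "H = (\<lambda>c b x. \<epsilon> c * (\<Sum>a<N. \<alpha> c a * (\<Sum>\<tau>\<in>P. sg \<tau> * ((-1)^n * pathsum N (C \<tau>) n a b x))))"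
  define g where "g = grading_op deg \<circ> matop N \<alpha> \<circ> atiyah_pow N d D n"
  have gH: "g v c = (\<Sum>b<N. H c b (v b))" if "v \<in> vecs N" "c < N" for v c
  proof -
    let ?X = "\<lambda>a \<tau> b. (-1)^n * pathsum N (C \<tau>) n a b (v b)"
    define M where "M = (\<Sum>a<N. \<alpha> c a * atiyah_pow N d D n v a)"
    have g1: "g v c = \<epsilon> c * M"
      unfolding g_def M_def \<epsilon>_def using that(2) by (simp add: grading_op_def matop_def)
    have "M = (\<Sum>a<N. \<Sum>\<tau>\<in>P. \<Sum>b<N. \<alpha> c a * (sg \<tau> * ?X a \<tau> b))"
      unfolding M_def
    proof (intro sum.cong refl)
      fix a assume "a \<in> {..<N}"
      then have a: "a < N" by simp
      have "atiyah_pow N d D n v a = (\<Sum>\<tau>\<in>P. sg \<tau> * (\<Sum>b<N. ?X a \<tau> b))"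
        unfolding atiyah_pow_def P_def[symmetric] sg_def
        by (intro sum.cong refl) (simp add: comp_expand[OF _ a])
      then show "\<alpha> c a * atiyah_pow N d D n v a = (\<Sum>\<tau>\<in>P. \<Sum>b<N. \<alpha> c a * (sg \<tau> * ?X a \<tau> b))"
        by (simp add: sum_distrib_left)
    qed
    also have "\<dots> = (\<Sum>a<N. \<Sum>b<N. \<Sum>\<tau>\<in>P. \<alpha> c a * (sg \<tau> * ?X a \<tau> b))"
      by (intro sum.cong refl sum.swap)
    also have "\<dots> = (\<Sum>b<N. \<Sum>a<N. \<Sum>\<tau>\<in>P. \<alpha> c a * (sg \<tau> * ?X a \<tau> b))"
      by (rule sum.swap)
    finally have "M = \<dots>" .
    then show ?thesis unfolding g1 H_def by (simp add: sum_distrib_left)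
  qed
  have gv: "g v \<in> vecs N" for v
    unfolding g_def by (simp add: vecs_def grading_op_def matop_def)
  have Hgood: "good \<phi> t n (H c b)" for c b
    unfolding H_def
    by (intro good_cmult good_sum good_pathsum Cgood rm) (auto simp: P_def)
  have "qtrace (vec_sc \<phi>) (vecs N) (tvecs t n N) g = (\<Sum>c<N. \<Sum>(y, h)\<leftarrow>BR. h (H c c y))"
    unfolding qtX
    by (rule trace_X[OF rm BR BX gv gH]) (use Hgood in \<open>auto simp: good_def\<close>)
  also have "\<dots> = qR BR (\<lambda>x. \<Sum>c<N. H c c x)"
    unfolding qR_sum[OF BR] unfolding qR_def ..
  also have "\<dots> = qR BR (\<lambda>x. (-1)^n * (\<Sum>q\<in>{0..n} \<rightarrow>\<^sub>E {0..<N}. \<epsilon> (q n) * (\<Sum>\<tau>\<in>P. sg \<tau> * (\<alpha> (q n) (q 0) * T \<tau> q x))))"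
    unfolding H_def pathsum_def T_def by (subst core_identity[OF finP]) (rule refl)
  also have "\<dots> = (-1)^n * (\<Sum>q\<in>{0..n} \<rightarrow>\<^sub>E {0..<N}. \<epsilon>' (q n) * (\<Sum>\<tau>\<in>P. sg' \<tau> * qR BR (\<lambda>x. \<alpha> (q n) (q 0) * T \<tau> q x)))"
  proof -
    have phi1: "\<phi> 1 = 1" using rm unfolding ring_morphism_def by blast
    have e1: "((-1)^n :: 'r) = \<phi> ((-1)^n)" by (simp add: rm_pow[OF rm] rm_neg[OF rm] phi1)
    have e2: "\<epsilon> = (\<lambda>c. \<phi> (\<epsilon>' c))" unfolding \<epsilon>_def \<epsilon>'_def by (auto simp: rm_neg[OF rm] phi1)
    have e3: "sg = (\<lambda>\<tau>. \<phi> (sg' \<tau>))" unfolding sg_def sg'_def by (simp add: rm_of_int[OF rm])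
    show ?thesis unfolding e1 e2 e3 by (simp only: qR_smult[OF BR] qR_sum[OF BR])
  qed
  also have "\<dots> = (-1) ^ n * res_str \<phi> t n D N deg d \<alpha>"
  proof -
    define G where "G = (\<lambda>p. \<epsilon>' (p 0) * (\<Sum>\<tau>\<in>P. sg' \<tau> * qR BR (\<lambda>x. \<alpha> (p 0) (p (if 0 = n then 0 else Suc 0)) *
       comp_ops (\<lambda>k. C \<tau> k (p (Suc k)) (p (if Suc k = n then 0 else Suc (Suc k)))) n x)))"
    have "res_str \<phi> t n D N deg d \<alpha> = (\<Sum>p\<in>{0..n} \<rightarrow>\<^sub>E {0..<N}. G p)"
      unfolding res_str_def Let_def
    proof (intro sum.cong refl)
      fix p
      have "comp_ops (\<lambda>k. dcomm D (\<tau> k) (map (\<lambda>k. d (p k) (p (if k = n then 0 else Suc k))) [1..<Suc n] ! k)) n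
          = comp_ops (\<lambda>k. C \<tau> k (p (Suc k)) (p (if Suc k = n then 0 else Suc (Suc k)))) n" for \<tau>
        by (rule comp_ops_cong) (simp add: C_def nth_map nth_upt del: upt_Suc)
      then show "(if deg (p 0) then -1 else 1) * res_mon \<phi> t n D (\<alpha> (p 0) (p (if 0 = n then 0 else Suc 0)))
           (map (\<lambda>k. d (p k) (p (if k = n then 0 else Suc k))) [1..<Suc n]) = G p"
        unfolding res_mon_def G_def qtR P_def[symmetric] \<epsilon>'_def sg'_def by simp
    qed
    also have "\<dots> = (\<Sum>q\<in>{0..n} \<rightarrow>\<^sub>E {0..<N}. G (rinv n q))"
      by (rule rot_reindex[symmetric])
    also have "\<dots> = (\<Sum>q\<in>{0..n} \<rightarrow>\<^sub>E {0..<N}. \<epsilon>' (q n) * (\<Sum>\<tau>\<in>P. sg' \<tau> * qR BR (\<lambda>x. \<alpha> (q n) (q 0) * T \<tau> q x)))"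
    proof (intro sum.cong refl)
      fix q
      have "comp_ops (\<lambda>k. C \<tau> k (rinv n q (Suc k)) (rinv n q (if Suc k = n then 0 else Suc (Suc k)))) n = T \<tau> q" for \<tau>
        unfolding T_def by (rule comp_ops_cong) (simp add: rinv_facts)
      then show "G (rinv n q) = \<epsilon>' (q n) * (\<Sum>\<tau>\<in>P. sg' \<tau> * qR BR (\<lambda>x. \<alpha> (q n) (q 0) * T \<tau> q x))"
        unfolding G_def by (simp add: rinv_facts)
    qed
    finally show ?thesis by simp
  qed
  finally show ?thesis unfolding g_def .
qed


end
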